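(* Let $D$ denote the set of variable network games $(v,\rho)\in\mathbb V^N\times\mathbb P^N$ such that $v$ is component additive. Then: (i) the Expected Position Value $\Psi^p$ is an allocation rule on the class of variable network games which, on $D$, satisfies component balance and the balanced link contributions property; and (ii) if $\Psi\colon\mathbb V^N\times\mathbb P^N\to\mathbb R^N$ is any allocation rule on the class of variable network games satisfying component balance and the balanced link contributions property for all $(v,\rho)\in D$, then $\Psi(v,\rho)=\Psi^p(v,\rho)$ for all $(v,\rho)\in D$. That is, $\Psi^p$ is the unique allocation rule on the class of component additive variable network games that satisfies component balance and the balanced link contributions property.
   Context: $N=\{1,\dots,n\}$ is a finite player set. A link is an unordered pair $ij=\{i,j\}$ of distinct players; $g_N$ is the set of all links; a network is any $g\subseteq g_N$; $\mathbb G^N$ is the set of all networks. For $g\in\mathbb G^N$: $N_i(g)=\{j\ne i: ij\in g\}$, $L_i(g)=\{ij\in g\}$ (links of $i$ in $g$), $N(g)=\bigcup_i N_i(g)$, and $N_0(g)=N\setminus N(g)$ (isolated players). $g+ij=g\cup\{ij\}$, $g-ij=g\setminus\{ij\}$. A component of $g$ is a nonempty subnetwork $h\subseteq g$ that is connected (any two players of $N(h)$ are joined by a path in $h$) and maximal (if $i\in N(h)$ and $ij\in g$ then $ij\in h$); $C(g)$ is the set of components of $g$. A network formation probability distribution is a map $\rho\colon\mathbb G^N\to[0,1]$ with $\sum_g\rho(g)=1$; $\mathbb P^N$ is the set of these. $\mathbb G(\rho)=\{g:\rho(g)>0\}$, and the extent is $g(\rho)=\bigcup_{g\in\mathbb G(\rho)}g$.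 For a network $g$, the restriction $\rho_g\in\mathbb P^N$ is $\rho_g(h)=\sum_{h'\subseteq g_N\setminus g}\rho(h\cup h')$ if $h\subseteq g$ and $\rho_g(h)=0$ otherwise. For a link $ij$, $\rho^{-ij}=\rho_{g_N-ij}$. A network game is $v\colon\mathbb G^N\to\mathbb R$ with $v(\varnothing)=0$; $\mathbb V^N$ is the set of these. $v$ is component additive if $v(g)=\sum_{h\in C(g)}v(h)$ for all $g$. A variable network game is a pair $(v,\rho)\in\mathbb V^N\times\mathbb P^N$. An allocation rule on the class of variable network games is a map $\Psi\colon\mathbb V^N\times\mathbb P^N\to\mathbb R^N$ with $\Psi_i(v,\rho)=0$ for every $i\in N_0(g(\rho))$. It is component balanced (on $(v,\rho)$ with $v$ component additive) if for every $h\in C(g(\rho))$: $\sum_{i\in N(h)}\Psi_i(v,\rho)=\sum_{g\in\mathbb G(\rho)}\rho(g)\,v(g\cap h)$. It satisfies the balanced link contributions property if for all players $i\neq j$: $\sum_{jk\in L_j(g(\rho))}[\Psi_i(v,\rho)-\Psi_i(v,\rho^{-jk})]=\sum_{ik\in L_i(g(\rho))}[\Psi_j(v,\rho)-\Psi_j(v,\rho^{-ik})]$. The Position Value for network games is $Y^p_i(v,g)=\tfrac12\sum_{ij\in g}\sum_{h\subseteq g-ij}\frac{\#h!\,(\#g-\#h-1)!}{\#g!}\,(v(h+ij)-v(h))$. The Expected Position Value is $\Psi^p(v,\rho)=\sum_{g\in\mathbb G^N}\rho(g)\,Y^p(v,g)$. *)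

theory Defs
  imports Main Complex_Main
begin

text \<open>Players are the elements of a finite type 'a (the player set N is UNIV).
A link is an unordered pair {i,j} of distinct players; a network is a set of links.\<close>

type_synonym 'a network = "'a set set"
type_synonym 'a game = "'a network \<Rightarrow> real"
type_synonym 'a pdist = "'a network \<Rightarrow> real"
type_synonym 'a rule = "'a game \<Rightarrow> 'a pdist \<Rightarrow> 'a \<Rightarrow> real"

definition complete_net :: "'a network" where
  "complete_net = {{i, j} | i j. i \<noteq> j}"

definition networks :: "'a network set" where
  "networks = Pow complete_net"

definition nbrs :: "'a network \<Rightarrow> 'a \<Rightarrow> 'a set" where
  "nbrs g i = {j. j \<noteq> i \<and> {i, j} \<in> g}"

definition links_of :: "'a network \<Rightarrow> 'a \<Rightarrow> 'a network" where
  "links_of g i = {l \<in> g. i \<in> l}"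

definition players :: "'a network \<Rightarrow> 'a set" where
  "players g = (\<Union>i. nbrs g i)"

definition isolated :: "'a network \<Rightarrow> 'a set" where
  "isolated g = UNIV - players g"

definition net_connected :: "'a network \<Rightarrow> bool" where
  "net_connected h \<longleftrightarrow>
     (\<forall>i\<in>players h. \<forall>j\<in>players h. (\<lambda>x y. {x, y} \<in> h)\<^sup>*\<^sup>* i j)"

definition components :: "'a network \<Rightarrow> 'a network set" where
  "components g = {h. h \<noteq> {} \<and> h \<subseteq> g \<and> net_connected h \<and>
      (\<forall>i\<in>players h. \<forall>j. {i, j} \<in> g \<longrightarrow> {i, j} \<in> h)}"

definition games :: "'a game set" where
  "games = {v. v {} = 0}"

definition comp_additive :: "'a game \<Rightarrow> bool" where
  "comp_additive v \<longleftrightarrow> (\<forall>g\<in>networks. v g = (\<Sum>h\<in>components g. v h))"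

definition pdists :: "'a pdist set" where
  "pdists = {\<rho>. (\<forall>g. 0 \<le> \<rho> g \<and> \<rho> g \<le> 1) \<and> (\<forall>g. g \<notin> networks \<longrightarrow> \<rho> g = 0)
                 \<and> (\<Sum>g\<in>networks. \<rho> g) = 1}"

definition support :: "'a pdist \<Rightarrow> 'a network set" where
  "support \<rho> = {g \<in> networks. \<rho> g > 0}"

definition extent :: "'a pdist \<Rightarrow> 'a network" where
  "extent \<rho> = \<Union>(support \<rho>)"

definition restrict_dist :: "'a pdist \<Rightarrow> 'a network \<Rightarrow> 'a pdist" where
  "restrict_dist \<rho> g h =
     (if h \<subseteq> g then (\<Sum>h'\<in>Pow (complete_net - g). \<rho> (h \<union> h')) else 0)"

definition remove_link :: "'a pdist \<Rightarrow> 'a set \<Rightarrow> 'a pdist" where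
  "remove_link \<rho> l = restrict_dist \<rho> (complete_net - {l})"

definition position_value :: "'a game \<Rightarrow> 'a network \<Rightarrow> 'a \<Rightarrow> real" where
  "position_value v g i = 1/2 * (\<Sum>l\<in>links_of g i. \<Sum>h\<in>Pow (g - {l}).
      (fact (card h) * fact (card g - card h - 1) / fact (card g)) * (v (insert l h) - v h))"

definition expected_position_value :: "'a rule" where
  "expected_position_value v \<rho> i = (\<Sum>g\<in>networks. \<rho> g * position_value v g i)"

definition allocation_rule :: "'a rule \<Rightarrow> bool" where
  "allocation_rule \<Psi> \<longleftrightarrow> (\<forall>v\<in>games. \<forall>\<rho>\<in>pdists. \<forall>i\<in>isolated (extent \<rho>). \<Psi> v \<rho> i = 0)"

definition component_balanced :: "'a rule \<Rightarrow> 'a game \<Rightarrow> 'a pdist \<Rightarrow> bool" where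
  "component_balanced \<Psi> v \<rho> \<longleftrightarrow>
     (\<forall>h\<in>components (extent \<rho>).
        (\<Sum>i\<in>players h. \<Psi> v \<rho> i) = (\<Sum>g\<in>support \<rho>. \<rho> g * v (g \<inter> h)))"

definition balanced_link_contributions :: "'a rule \<Rightarrow> 'a game \<Rightarrow> 'a pdist \<Rightarrow> bool" where
  "balanced_link_contributions \<Psi> v \<rho> \<longleftrightarrow>
     (\<forall>i j. i \<noteq> j \<longrightarrow>
        (\<Sum>l\<in>links_of (extent \<rho>) j. \<Psi> v \<rho> i - \<Psi> v (remove_link \<rho> l) i) =
        (\<Sum>l\<in>links_of (extent \<rho>) i. \<Psi> v \<rho> j - \<Psi> v (remove_link \<rho> l) j))"

definition D_class :: "('a game \<times> 'a pdist) set" where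
  "D_class = {(v, \<rho>). v \<in> games \<and> \<rho> \<in> pdists \<and> comp_additive v}"

end

theory Submission
  imports Defs
begin


definition cf :: "nat \<Rightarrow> nat \<Rightarrow> real" where
  "cf n s = fact s * fact (n - s - 1) / fact n"

definition sh :: "('b set \<Rightarrow> real) \<Rightarrow> 'b set \<Rightarrow> 'b \<Rightarrow> real" where
  "sh f g l = (\<Sum>h\<in>Pow (g - {l}). cf (card g) (card h) * (f (insert l h) - f h))"

lemma pv_sh: "position_value v g i = 1/2 * (\<Sum>l\<in>links_of g i. sh v g l)"
  unfolding position_value_def sh_def cf_def by simp

lemma coef_eq:
  assumes "finite g" "T \<subseteq> g"
  shows "real (card T) * cf (card g) (card T - 1) - real (card g - card T) * cf (card g) (card T)
     = (if T = g then 1 else 0) - (if T = {} then 1 else 0)"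
proof -
  let ?n = "card g" and ?t = "card T"
  have tle: "?t \<le> ?n" using assms card_mono by blast
  have fT: "finite T" using assms finite_subset by blast
  consider "?t = 0" | "?t = ?n" "?t > 0" | "0 < ?t" "?t < ?n" using tle by linarith
  then show ?thesis
  proof cases
    case 1
    then have "T = {}" using fT by simp
    moreover have "real ?n * cf ?n 0 = (if {} = g then 0 else 1)"
      using assms by (cases ?n) (auto simp: cf_def)
    ultimately show ?thesis using 1 by auto
  next
    case 2
    then have "T = g" using assms card_subset_eq by blast
    moreover have "T \<noteq> {}" using 2 by auto
    moreover have "real ?n * cf ?n (?n - 1) = 1"
      using 2 by (cases ?n) (auto simp: cf_def)
    ultimately show ?thesis by simp
  next
    case 3
    then have "T \<noteq> g" "T \<noteq> {}" by auto
    define s where "s = ?t - 1"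
    define r where "r = ?n - ?t - 1"
    have e1: "?t = Suc s" "?n = Suc (Suc (s + r))"
      using 3 unfolding s_def r_def by auto
    have "real ?t * cf ?n (?t - 1) = real (?n - ?t) * cf ?n ?t"
      unfolding cf_def e1 by (simp add: algebra_simps)
    with \<open>T \<noteq> g\<close> \<open>T \<noteq> {}\<close> show ?thesis by simp
  qed
qed

lemma sh_efficient:
  assumes "finite g"
  shows "(\<Sum>l\<in>g. sh f g l) = f g - f {}"
proof -
  let ?n = "card g"
  have A: "(\<Sum>l\<in>g. \<Sum>h\<in>Pow (g - {l}). cf ?n (card h) * f (insert l h))
        = (\<Sum>T\<in>Pow g. real (card T) * cf ?n (card T - 1) * f T)"
  proof -
    have "(\<Sum>l\<in>g. \<Sum>h\<in>Pow (g - {l}). cf ?n (card h) * f (insert l h))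
        = (\<Sum>l\<in>g. \<Sum>T\<in>{T. T \<in> Pow g \<and> l \<in> T}. cf ?n (card T - 1) * f T)"
    proof (rule sum.cong[OF refl])
      fix l assume l: "l \<in> g"
      have ci: "\<And>a. a \<subseteq> g - {l} \<Longrightarrow> card (insert l a) = Suc (card a)"
        using assms by (meson Diff_subset card_insert_disjoint finite_subset insert_Diff_single subset_Diff_insert subset_insert)
      show "(\<Sum>h\<in>Pow (g - {l}). cf ?n (card h) * f (insert l h))
        = (\<Sum>T\<in>{T. T \<in> Pow g \<and> l \<in> T}. cf ?n (card T - 1) * f T)"
        apply (rule sum.reindex_bij_witness[where i="\<lambda>T. T - {l}" and j="insert l"])
        using l assms ci by auto
    qed
    also have "\<dots> = (\<Sum>T\<in>Pow g. \<Sum>l\<in>{l. l \<in> g \<and> l \<in> T}. cf ?n (card T - 1) * f T)"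
      by (rule sum.swap_restrict) (use assms in auto)
    also have "\<dots> = (\<Sum>T\<in>Pow g. real (card T) * cf ?n (card T - 1) * f T)"
    proof (rule sum.cong[OF refl])
      fix T assume T: "T \<in> Pow g"
      have "{l. l \<in> g \<and> l \<in> T} = T" using T by auto
      then show "(\<Sum>l\<in>{l. l \<in> g \<and> l \<in> T}. cf ?n (card T - 1) * f T) = real (card T) * cf ?n (card T - 1) * f T"
        by simp
    qed
    finally show ?thesis .
  qed
  have B: "(\<Sum>l\<in>g. \<Sum>h\<in>Pow (g - {l}). cf ?n (card h) * f h)
        = (\<Sum>T\<in>Pow g. real (?n - card T) * cf ?n (card T) * f T)"
  proof -
    have "(\<Sum>l\<in>g. \<Sum>h\<in>Pow (g - {l}). cf ?n (card h) * f h)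
        = (\<Sum>l\<in>g. \<Sum>T\<in>{T. T \<in> Pow g \<and> l \<notin> T}. cf ?n (card T) * f T)"
      by (rule sum.cong[OF refl], rule sum.cong) auto
    also have "\<dots> = (\<Sum>T\<in>Pow g. \<Sum>l\<in>{l. l \<in> g \<and> l \<notin> T}. cf ?n (card T) * f T)"
      by (rule sum.swap_restrict) (use assms in auto)
    also have "\<dots> = (\<Sum>T\<in>Pow g. real (?n - card T) * cf ?n (card T) * f T)"
    proof (rule sum.cong[OF refl])
      fix T assume T: "T \<in> Pow g"
      have "{l. l \<in> g \<and> l \<notin> T} = g - T" by auto
      moreover have "card (g - T) = ?n - card T" using T assms
        by (simp add: card_Diff_subset finite_subset)
      ultimately show "(\<Sum>l\<in>{l. l \<in> g \<and> l \<notin> T}. cf ?n (card T) * f T) = real (?n - card T) * cf ?n (card T) * f T"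
        by simp
    qed
    finally show ?thesis .
  qed
  have "(\<Sum>l\<in>g. sh f g l) = (\<Sum>l\<in>g. \<Sum>h\<in>Pow (g - {l}). cf ?n (card h) * f (insert l h))
     - (\<Sum>l\<in>g. \<Sum>h\<in>Pow (g - {l}). cf ?n (card h) * f h)"
    unfolding sh_def by (simp add: sum_subtractf right_diff_distrib)
  also have "\<dots> = (\<Sum>T\<in>Pow g. (real (card T) * cf ?n (card T - 1) - real (?n - card T) * cf ?n (card T)) * f T)"
    unfolding A B by (simp add: sum_subtractf left_diff_distrib)
  also have "\<dots> = (\<Sum>T\<in>Pow g. ((if T = g then 1 else 0) - (if T = {} then 1 else 0)) * f T)"
  proof (rule sum.cong[OF refl])
    fix T assume "T \<in> Pow g"
    then have "T \<subseteq> g" by auto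
    from coef_eq[OF assms this] show "(real (card T) * cf ?n (card T - 1) - real (?n - card T) * cf ?n (card T)) * f T
       = ((if T = g then 1 else 0) - (if T = {} then 1 else 0)) * f T" by simp
  qed
  also have "\<dots> = (\<Sum>T\<in>Pow g. (if T = g then f T else 0)) - (\<Sum>T\<in>Pow g. (if T = {} then f T else 0))"
    by (simp only: sum_subtractf[symmetric]) (rule sum.cong, auto)
  also have "\<dots> = f g - f {}"
    using assms by (simp add: sum.delta)
  finally show ?thesis .
qed

lemma cf_rec:
  assumes "s + 2 \<le> n"
  shows "cf (n - 1) s = cf n s + cf n (Suc s)"
proof -
  obtain r where n: "n = Suc (Suc (s + r))" using assms
    by (metis add_2_eq_Suc' add_Suc_right le_Suc_ex add.commute)
  define A where "A = (fact s :: real)"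
  define B where "B = (fact r :: real)"
  define M where "M = (fact (Suc (s + r)) :: real)"
  have M: "M > 0" unfolding M_def by simp
  have e: "cf (n - 1) s = A * B / M"
       "cf n s = A * ((real r + 1) * B) / ((real s + real r + 2) * M)"
       "cf n (Suc s) = ((real s + 1) * A) * B / ((real s + real r + 2) * M)"
    unfolding cf_def n A_def B_def M_def by (simp_all add: algebra_simps)
  have p: "real s + real r + 2 > 0" by simp
  define Q where "Q = (real s + real r + 2) * M"
  have Q: "Q \<noteq> 0" using M p unfolding Q_def by simp
  have "A * ((real r + 1) * B) / Q + ((real s + 1) * A) * B / Q = (A * B * (real s + real r + 2)) / Q"
    by (simp add: add_divide_distrib[symmetric] algebra_simps)
  also have "\<dots> = A * B / M" unfolding Q_def using M p by simp
  finally show ?thesis unfolding e Q_def by simp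
qed

lemma sh_diff:
  assumes g: "finite g" and l: "l \<in> g" "l' \<in> g" "l \<noteq> l'"
  shows "sh f g l - sh f (g - {l'}) l = (\<Sum>S\<in>Pow (g - {l, l'}). cf (card g) (Suc (card S)) *
            (f (insert l (insert l' S)) - f (insert l' S) - f (insert l S) + f S))"
proof -
  define K where "K = g - {l, l'}"
  define D where "D S = f (insert l S) - f S" for S
  have fK: "finite K" using g K_def by auto
  have l'K: "l' \<notin> K" "l \<notin> K" using K_def by auto
  have gl: "g - {l} = insert l' K" using K_def l by auto
  have gl': "g - {l'} - {l} = K" using K_def by auto
  have c2: "card {l, l'} = 2" using l by simp
  have sub: "{l, l'} \<subseteq> g" using l by simp
  have "card K = card g - 2" unfolding K_def using card_Diff_subset[OF _ sub] c2 by simp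
  moreover have "2 \<le> card g" using card_mono[OF g sub] c2 by simp
  ultimately have cK: "card K + 2 = card g" by simp
  have cg': "card (g - {l'}) = card g - 1" using l g by simp
  have inj: "inj_on (insert l') (Pow K)" using l'K
    by (meson PowD inj_on_def insert_ident subset_iff)
  have "sh f g l = (\<Sum>S\<in>Pow K. cf (card g) (card S) * D S) + (\<Sum>S\<in>insert l' ` Pow K. cf (card g) (card S) * D S)"
    unfolding sh_def gl Pow_insert D_def
    by (rule sum.union_disjoint) (use fK l'K in auto)
  also have "(\<Sum>S\<in>insert l' ` Pow K. cf (card g) (card S) * D S) = (\<Sum>S\<in>Pow K. cf (card g) (Suc (card S)) * D (insert l' S))"
    by (subst sum.reindex[OF inj]) (use fK l'K in \<open>auto intro!: sum.cong simp: finite_subset card_insert_if\<close>)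
  finally have A: "sh f g l = (\<Sum>S\<in>Pow K. cf (card g) (card S) * D S + cf (card g) (Suc (card S)) * D (insert l' S))"
    by (simp add: sum.distrib)
  have B: "sh f (g - {l'}) l = (\<Sum>S\<in>Pow K. (cf (card g) (card S) + cf (card g) (Suc (card S))) * D S)"
    unfolding sh_def gl' cg' D_def
  proof (rule sum.cong[OF refl])
    fix S assume "S \<in> Pow K"
    then have "card S \<le> card K" using fK card_mono by auto
    then have "cf (card g - 1) (card S) = cf (card g) (card S) + cf (card g) (Suc (card S))"
      using cK by (intro cf_rec) auto
    then show "cf (card g - 1) (card S) * (f (insert l S) - f S) = (cf (card g) (card S) + cf (card g) (Suc (card S))) * (f (insert l S) - f S)"
      by simp
  qed
  show ?thesis unfolding A B K_def[symmetric] D_def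
    by (simp add: sum_subtractf[symmetric] algebra_simps)
qed

lemma sh_bc:
  assumes g: "finite g" and l: "l \<in> g" "l' \<in> g" "l \<noteq> l'"
  shows "sh f g l - sh f (g - {l'}) l = sh f g l' - sh f (g - {l}) l'"
  unfolding sh_diff[OF assms] sh_diff[OF g l(2) l(1) l(3)[symmetric]]
  by (simp add: insert_commute algebra_simps)

lemma pv_remove:
  assumes g: "finite g"
  shows "position_value v g i - position_value v (g - {l'}) i
     = 1/2 * (\<Sum>l\<in>links_of g i. sh v g l - (if l = l' then 0 else sh v (g - {l'}) l))"
proof -
  have "links_of (g - {l'}) i = {l \<in> links_of g i. l \<noteq> l'}"
    unfolding links_of_def by auto
  then have "(\<Sum>l\<in>links_of (g - {l'}) i. sh v (g - {l'}) l) = (\<Sum>l\<in>links_of g i. if l = l' then 0 else sh v (g - {l'}) l)" (is ?X)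
  proof -
    have fin: "finite (links_of g i)" using g unfolding links_of_def by simp
    show ?X unfolding \<open>links_of (g - {l'}) i = _\<close> by (subst sum.inter_filter[OF fin]) (rule sum.cong, auto)
  qed
  then show ?thesis unfolding pv_sh
    by (simp add: sum_subtractf right_diff_distrib)
qed

lemma pv_blc:
  assumes g: "finite g"
  shows "(\<Sum>l'\<in>links_of g j. position_value v g i - position_value v (g - {l'}) i)
       = (\<Sum>l'\<in>links_of g i. position_value v g j - position_value v (g - {l'}) j)"
proof -
  define D where "D l l' = sh v g l - (if l = l' then 0 else sh v (g - {l'}) l)" for l l'
  have sym: "D l l' = D l' l" if "l \<in> g" "l' \<in> g" for l l'
    using sh_bc[OF g that] that unfolding D_def by (cases "l = l'") auto
  have fl: "finite (links_of g k)" for k using g unfolding links_of_def by simp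
  have sub: "links_of g k \<subseteq> g" for k unfolding links_of_def by auto
  have "(\<Sum>l'\<in>links_of g j. position_value v g i - position_value v (g - {l'}) i)
      = 1/2 * (\<Sum>l'\<in>links_of g j. \<Sum>l\<in>links_of g i. D l l')"
    unfolding pv_remove[OF g] D_def by (simp add: sum_distrib_left)
  also have "(\<Sum>l'\<in>links_of g j. \<Sum>l\<in>links_of g i. D l l') = (\<Sum>l\<in>links_of g i. \<Sum>l'\<in>links_of g j. D l l')"
    by (rule sum.swap)
  also have "\<dots> = (\<Sum>l\<in>links_of g i. \<Sum>l'\<in>links_of g j. D l' l)"
    using sym sub by (intro sum.cong refl) blast
  also have "1/2 * \<dots> = (\<Sum>l'\<in>links_of g i. position_value v g j - position_value v (g - {l'}) j)"
    unfolding pv_remove[OF g] D_def by (simp add: sum_distrib_left)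
  finally show ?thesis .
qed



lemma players_iff: "x \<in> players g \<longleftrightarrow> (\<exists>y. y \<noteq> x \<and> {x, y} \<in> g)"
  unfolding players_def nbrs_def by (auto simp: insert_commute)

lemma complete_net_iff: "l \<in> complete_net \<longleftrightarrow> (\<exists>a b. a \<noteq> b \<and> l = {a, b})"
  unfolding complete_net_def by auto

lemma link_cases:
  assumes "l \<in> g" "g \<subseteq> complete_net"
  obtains a b where "a \<noteq> b" "l = {a, b}"
proof -
  have "l \<in> complete_net" using assms by auto
  then show ?thesis unfolding complete_net_iff using that by blast
qed

lemma networks_iff: "g \<in> networks \<longleftrightarrow> g \<subseteq> complete_net"
  unfolding networks_def by auto

lemma mem_players1: "{x, y} \<in> g \<Longrightarrow> x \<noteq> y \<Longrightarrow> x \<in> players g"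
  unfolding players_iff by (rule exI[of _ y]) simp

lemma mem_players2: "{x, y} \<in> g \<Longrightarrow> x \<noteq> y \<Longrightarrow> y \<in> players g"
  unfolding players_iff by (rule exI[of _ x]) (simp add: insert_commute)

lemma not_both: "players A \<inter> players B = {} \<Longrightarrow> x \<in> players A \<Longrightarrow> x \<noteq> y \<Longrightarrow> {x, y} \<notin> B"
  using mem_players1[of x y B] by auto

lemma players_mono: "c \<subseteq> A \<Longrightarrow> players c \<subseteq> players A"
  unfolding subset_iff players_iff by blast

lemma singleton_notin: assumes "A \<subseteq> complete_net" shows "{x, x} \<notin> A"
proof
  assume "{x, x} \<in> A"
  then have "{x, x} \<in> complete_net" using assms by auto
  then obtain a b where ab: "a \<noteq> b" "{x, x} = {a, b}" unfolding complete_net_iff by blast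
  have "a \<in> {x, x}" "b \<in> {x, x}" unfolding ab(2) by auto
  then show False using ab by simp
qed

lemma conn_sub:
  assumes c: "c \<subseteq> A \<union> B" "c \<subseteq> complete_net" "net_connected c"
    and AB: "players A \<inter> players B = {}"
    and x: "x \<in> players c" "x \<in> players A"
  shows "c \<subseteq> A"
proof
  fix l assume l: "l \<in> c"
  then obtain a b where ab: "a \<noteq> b" "l = {a, b}" using c(2) by (rule link_cases)
  have a: "a \<in> players c" using ab l mem_players1[of a b c] by auto
  have path: "(\<lambda>x y. {x, y} \<in> c)\<^sup>*\<^sup>* x a" using c(3) x(1) a unfolding net_connected_def by blast
  have "y \<in> players A" if "(\<lambda>x y. {x, y} \<in> c)\<^sup>*\<^sup>* x y" for y
    using that
  proof (induction rule: rtranclp_induct)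
    case base then show ?case using x(2) .
  next
    case (step p q)
    have "p \<noteq> q" using step(2) singleton_notin[OF c(2), of p] by auto
    have "{p, q} \<notin> B"
      using not_both[OF AB step(3) \<open>p \<noteq> q\<close>] .
    then have "{q, p} \<in> A" using step(2) c(1) by (auto simp: insert_commute)
    then show ?case using \<open>p \<noteq> q\<close> mem_players1[of q p A] by simp
  qed
  from this[OF path] have "a \<in> players A" .
  then have "{a, b} \<notin> B" using not_both[OF AB _ ab(1)] by simp
  then show "l \<in> A" using ab l c(1) by auto
qed

lemma comp_part:
  assumes c: "c \<in> components (A \<union> B)" and AB: "players A \<inter> players B = {}"
    and cn: "A \<union> B \<subseteq> complete_net" and l: "l \<in> c" "l \<in> A"
  shows "c \<in> components A"
proof -
  have c': "c \<noteq> {}" "c \<subseteq> A \<union> B" "net_connected c"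
       "\<forall>i\<in>players c. \<forall>j. {i, j} \<in> A \<union> B \<longrightarrow> {i, j} \<in> c"
    using c unfolding components_def by auto
  have "c \<subseteq> complete_net" using c'(2) cn by auto
  then obtain a b where ab: "a \<noteq> b" "l = {a, b}" by (rule link_cases[OF l(1)])
  have "a \<in> players c" "a \<in> players A" using ab l mem_players1[of a b c] mem_players1[of a b A] by auto
  then have "c \<subseteq> A" using conn_sub[OF c'(2) \<open>c \<subseteq> complete_net\<close> c'(3) AB] by blast
  then show ?thesis using c' unfolding components_def by auto
qed

lemma comp_lift:
  assumes c: "c \<in> components A" and AB: "players A \<inter> players B = {}"
    and cn: "A \<union> B \<subseteq> complete_net"
  shows "c \<in> components (A \<union> B)"
proof -
  have c': "c \<noteq> {}" "c \<subseteq> A" "net_connected c"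
       "\<forall>i\<in>players c. \<forall>j. {i, j} \<in> A \<longrightarrow> {i, j} \<in> c"
    using c unfolding components_def by auto
  have "{i, j} \<in> c" if i: "i \<in> players c" and ij: "{i, j} \<in> A \<union> B" for i j
  proof -
    have iA: "i \<in> players A" using i players_mono[OF c'(2)] by blast
    have "i \<noteq> j" using ij cn singleton_notin[of "A \<union> B" i] by auto
    then have "{i, j} \<notin> B" using not_both[OF AB iA] by simp
    then show ?thesis using ij c'(4) i by auto
  qed
  then show ?thesis using c' unfolding components_def by auto
qed

lemma components_union:
  assumes AB: "players A \<inter> players B = {}" and cn: "A \<union> B \<subseteq> complete_net"
  shows "components (A \<union> B) = components A \<union> components B"
proof
  show "components (A \<union> B) \<subseteq> components A \<union> components B"
  proof
    fix c assume c: "c \<in> components (A \<union> B)"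
    then obtain l where l: "l \<in> c" "l \<in> A \<union> B" unfolding components_def by blast
    show "c \<in> components A \<union> components B"
    proof (cases "l \<in> A")
      case True then show ?thesis using comp_part[OF c AB cn l(1)] by blast
    next
      case False
      then have "l \<in> B" using l by auto
      moreover have "c \<in> components (B \<union> A)" using c by (simp add: Un_commute)
      ultimately show ?thesis using comp_part[of c B A l] AB cn l(1) by (auto simp: Un_commute Int_commute)
    qed
  qed
next
  show "components A \<union> components B \<subseteq> components (A \<union> B)"
    using comp_lift[OF _ AB cn] comp_lift[of _ B A] AB cn by (auto simp: Un_commute Int_commute)
qed

lemma split_players:
  assumes h: "h \<in> components E" and S: "S \<subseteq> E"
  shows "players (S \<inter> h) \<inter> players (S - h) = {}"
proof -
  have max: "\<forall>i\<in>players h. \<forall>j. {i, j} \<in> E \<longrightarrow> {i, j} \<in> h" using h unfolding components_def by auto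
  { fix x assume x1: "x \<in> players (S \<inter> h)" and x2: "x \<in> players (S - h)"
    from x1 have "x \<in> players h" using players_mono[of "S \<inter> h" h] by auto
    moreover obtain y where "{x, y} \<in> S - h" using x2 unfolding players_iff by blast
    ultimately have False using max S by auto }
  then show ?thesis by blast
qed

lemma v_split:
  fixes v :: "'a::finite game"
  assumes v: "comp_additive v" and h: "h \<in> components E" and S: "S \<subseteq> E" and E: "E \<subseteq> complete_net"
  shows "v S = v (S \<inter> h) + v (S - h)"
proof -
  let ?A = "S \<inter> h" and ?B = "S - h"
  have AB: "players ?A \<inter> players ?B = {}" using split_players[OF h S] .
  have cn: "?A \<union> ?B \<subseteq> complete_net" using S E by auto
  have eq: "?A \<union> ?B = S" by auto
  have cu: "components S = components ?A \<union> components ?B"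
    using components_union[OF AB cn] eq by simp
  have disj: "components ?A \<inter> components ?B = {}"
    unfolding components_def by auto
  have net: "S \<in> networks" "?A \<in> networks" "?B \<in> networks" using S E by (auto simp: networks_iff)
  have "v S = (\<Sum>c\<in>components S. v c)" using v net unfolding comp_additive_def by auto
  also have "\<dots> = (\<Sum>c\<in>components ?A. v c) + (\<Sum>c\<in>components ?B. v c)"
    unfolding cu by (rule sum.union_disjoint) (use disj in auto)
  also have "\<dots> = v ?A + v ?B" using v net unfolding comp_additive_def by auto
  finally show ?thesis .
qed

lemma comp_exists:
  assumes E: "E \<subseteq> complete_net" "E \<noteq> {}"
  shows "\<exists>h. h \<in> components E"
proof -
  obtain l where l: "l \<in> E" using E by blast
  then obtain a b where ab: "a \<noteq> b" "l = {a, b}" using E(1) by (rule link_cases)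
  define R where "R = (\<lambda>x y. {x, y} \<in> E)\<^sup>*\<^sup>*"
  define h where "h = {l \<in> E. \<exists>x\<in>l. R a x}"
  define R' where "R' = (\<lambda>x y. {x, y} \<in> h)\<^sup>*\<^sup>*"
  have Rh: "R' a y" if "R a y" for y
    using that unfolding R_def
  proof (induction rule: rtranclp_induct)
    case base then show ?case unfolding R'_def by simp
  next
    case (step p q)
    then have "{p, q} \<in> h" unfolding h_def R_def by auto
    then show ?case using step(3) unfolding R'_def by (simp add: rtranclp.rtrancl_into_rtrancl)
  qed
  have symh: "R' y x" if "R' x y" for x y
    using that unfolding R'_def
  proof (induction rule: rtranclp_induct)
    case base then show ?case by simp
  next
    case (step p q)
    then have "{q, p} \<in> h" by (simp add: insert_commute)
    then show ?case using step(3) by (simp add: converse_rtranclp_into_rtranclp)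
  qed
  have pl: "R a p" if P: "p \<in> players h" for p
  proof -
    obtain q where q: "q \<noteq> p" "{p, q} \<in> h" using P unfolding players_iff by blast
    then obtain x where x: "x \<in> {p, q}" "R a x" "{p, q} \<in> E" unfolding h_def by auto
    show ?thesis
    proof (cases "x = p")
      case True then show ?thesis using x by simp
    next
      case False
      then have "x = q" using x by auto
      then show ?thesis using x unfolding R_def by (simp add: insert_commute rtranclp.rtrancl_into_rtrancl)
    qed
  qed
  have "h \<noteq> {}" using l ab unfolding h_def R_def by auto
  moreover have "h \<subseteq> E" unfolding h_def by auto
  moreover have "net_connected h"
    unfolding net_connected_def
  proof (intro ballI)
    fix i j assume "i \<in> players h" "j \<in> players h"
    then have "R' a i" "R' a j" using pl Rh by auto
    then show "(\<lambda>x y. {x, y} \<in> h)\<^sup>*\<^sup>* i j" using symh unfolding R'_def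
      by (meson rtranclp_trans)
  qed
  moreover have "\<forall>i\<in>players h. \<forall>j. {i, j} \<in> E \<longrightarrow> {i, j} \<in> h"
    using pl unfolding h_def by auto
  ultimately show ?thesis unfolding components_def by blast
qed



lemma pd_nonneg: "\<rho> \<in> pdists \<Longrightarrow> 0 \<le> \<rho> g"
  unfolding pdists_def by auto

lemma pd_zero: "\<rho> \<in> pdists \<Longrightarrow> g \<notin> support \<rho> \<Longrightarrow> \<rho> g = 0"
  unfolding pdists_def support_def by (auto simp: not_less intro: order.antisym)

lemma pd_sub: "\<rho> \<in> pdists \<Longrightarrow> \<rho> g \<noteq> 0 \<Longrightarrow> g \<subseteq> extent \<rho>"
  using pd_zero unfolding extent_def by blast

lemma extent_net: "extent \<rho> \<subseteq> complete_net"
  unfolding extent_def support_def networks_def by auto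

lemma rl_eq:
  assumes l: "l \<in> complete_net"
  shows "remove_link \<rho> l h = (if h \<subseteq> complete_net - {l} then \<rho> h + \<rho> (insert l h) else 0)"
proof -
  have "complete_net - (complete_net - {l}) = {l}" using l by auto
  moreover have "Pow {l} = {{}, {l}}" by auto
  ultimately show ?thesis
    unfolding remove_link_def restrict_dist_def by simp
qed

lemma rl_sum:
  fixes \<rho> :: "'a::finite pdist"
  assumes l: "l \<in> complete_net"
  shows "(\<Sum>h\<in>networks. remove_link \<rho> l h * F h) = (\<Sum>g\<in>networks. \<rho> g * F (g - {l}))"
proof -
  define N0 where "N0 = {h \<in> (networks :: 'a network set). l \<notin> h}"
  define N1 where "N1 = {h \<in> (networks :: 'a network set). l \<in> h}"
  have iff: "h \<subseteq> complete_net - {l} \<longleftrightarrow> h \<in> N0" for h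
    unfolding N0_def networks_iff by auto
  have "(\<Sum>h\<in>networks. remove_link \<rho> l h * F h) = (\<Sum>h\<in>N0. (\<rho> h + \<rho> (insert l h)) * F h)"
    by (rule sum.mono_neutral_cong_right) (auto simp: rl_eq[OF l] iff N0_def)
  also have "\<dots> = (\<Sum>h\<in>N0. \<rho> h * F h) + (\<Sum>h\<in>N0. \<rho> (insert l h) * F h)"
    by (simp add: sum.distrib distrib_right)
  also have "(\<Sum>h\<in>N0. \<rho> (insert l h) * F h) = (\<Sum>g\<in>N1. \<rho> g * F (g - {l}))"
    by (rule sum.reindex_bij_witness[where i="\<lambda>g. g - {l}" and j="insert l"])
       (use l in \<open>auto simp: N0_def N1_def networks_iff\<close>)
  also have "(\<Sum>h\<in>N0. \<rho> h * F h) = (\<Sum>g\<in>N0. \<rho> g * F (g - {l}))"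
    by (rule sum.cong) (auto simp: N0_def)
  also have "(\<Sum>g\<in>N0. \<rho> g * F (g - {l})) + (\<Sum>g\<in>N1. \<rho> g * F (g - {l})) = (\<Sum>g\<in>N0 \<union> N1. \<rho> g * F (g - {l}))"
    by (rule sum.union_disjoint[symmetric]) (auto simp: N0_def N1_def)
  also have "N0 \<union> N1 = networks" unfolding N0_def N1_def by auto
  finally show ?thesis .
qed

lemma rl_pdist:
  fixes \<rho> :: "'a::finite pdist"
  assumes r: "\<rho> \<in> pdists" and l: "l \<in> complete_net"
  shows "remove_link \<rho> l \<in> pdists"
proof -
  have le1: "\<rho> h + \<rho> (insert l h) \<le> 1" if h: "h \<subseteq> complete_net - {l}" for h
  proof -
    have ne: "h \<noteq> insert l h" using h by auto
    have "\<rho> h + \<rho> (insert l h) = (\<Sum>g\<in>{h, insert l h}. \<rho> g)" using ne by simp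
    also have "\<dots> \<le> (\<Sum>g\<in>networks. \<rho> g)"
      by (rule sum_mono2) (use h l pd_nonneg[OF r] in \<open>auto simp: networks_iff\<close>)
    also have "\<dots> = 1" using r unfolding pdists_def by auto
    finally show ?thesis .
  qed
  have "(\<Sum>h\<in>networks. remove_link \<rho> l h) = (\<Sum>h\<in>networks. remove_link \<rho> l h * 1)" by simp
  also have "\<dots> = (\<Sum>g\<in>networks. \<rho> g * 1)" by (rule rl_sum[OF l])
  also have "\<dots> = 1" using r unfolding pdists_def by auto
  finally have s: "(\<Sum>h\<in>networks. remove_link \<rho> l h) = 1" .
  show ?thesis unfolding pdists_def
    using s le1 pd_nonneg[OF r]
    by (auto simp: rl_eq[OF l] networks_iff add_nonneg_nonneg)
qed

lemma rl_extent:
  fixes \<rho> :: "'a::finite pdist"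
  assumes r: "\<rho> \<in> pdists" and l: "l \<in> complete_net"
  shows "extent (remove_link \<rho> l) \<subseteq> extent \<rho> - {l}"
proof
  fix x assume "x \<in> extent (remove_link \<rho> l)"
  then obtain g where g: "g \<in> networks" "remove_link \<rho> l g > 0" "x \<in> g"
    unfolding extent_def support_def by auto
  then have gs: "g \<subseteq> complete_net - {l}" "\<rho> g + \<rho> (insert l g) > 0"
    by (auto simp: rl_eq[OF l] split: if_splits)
  then have "\<rho> g \<noteq> 0 \<or> \<rho> (insert l g) \<noteq> 0" by auto
  then have "g \<subseteq> extent \<rho>" using pd_sub[OF r] by blast
  then show "x \<in> extent \<rho> - {l}" using g gs by auto
qed

lemma epv_rl:
  fixes l :: "'a::finite set"
  assumes l: "l \<in> complete_net"
  shows "expected_position_value v (remove_link \<rho> l) i = (\<Sum>g\<in>networks. \<rho> g * position_value v (g - {l}) i)"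
  unfolding expected_position_value_def by (rule rl_sum[OF l])

lemma epv_alloc: "allocation_rule (expected_position_value :: 'a::finite rule)"
  unfolding allocation_rule_def
proof (intro ballI)
  fix v :: "'a game" and \<rho> :: "'a pdist" and i
  assume r: "\<rho> \<in> pdists" and i: "i \<in> isolated (extent \<rho>)"
  have "\<rho> g * position_value v g i = 0" if g: "g \<in> networks" for g
  proof (cases "\<rho> g = 0")
    case False
    then have sub: "g \<subseteq> extent \<rho>" using pd_sub[OF r] by blast
    have "links_of g i = {}"
    proof (rule ccontr)
      assume "links_of g i \<noteq> {}"
      then obtain l where l: "l \<in> g" "i \<in> l" unfolding links_of_def by auto
      obtain a b where ab: "a \<noteq> b" "l = {a, b}" using g unfolding networks_iff by (rule link_cases[OF l(1)])
      have "{a, b} \<in> extent \<rho>" using sub l ab by auto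
      then have "a \<in> players (extent \<rho>)" "b \<in> players (extent \<rho>)"
        using mem_players1 mem_players2 ab(1) by metis+
      then show False using i l ab unfolding isolated_def by auto
    qed
    then show ?thesis unfolding pv_sh by simp
  qed simp
  then show "expected_position_value v \<rho> i = 0"
    unfolding expected_position_value_def by (intro sum.neutral) blast
qed



lemma cb_g:
  fixes v :: "'a::finite game"
  assumes v: "comp_additive v" "v {} = 0" and h: "h \<in> components E"
    and E: "E \<subseteq> complete_net" and g: "g \<subseteq> E"
  shows "(\<Sum>i\<in>players h. position_value v g i) = v (g \<inter> h)"
proof -
  let ?P = "players h"
  have max: "\<forall>i\<in>players h. \<forall>j. {i, j} \<in> E \<longrightarrow> {i, j} \<in> h" using h unfolding components_def by auto
  have hE: "h \<subseteq> E" using h unfolding components_def by auto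
  have cnt: "card {i \<in> ?P. i \<in> l} = (if l \<in> h then 2 else 0)" if l: "l \<in> g" for l
  proof -
    have gc: "g \<subseteq> complete_net" using g E by auto
    obtain a b where ab: "a \<noteq> b" "l = {a, b}" by (rule link_cases[OF l gc])
    show ?thesis
    proof (cases "l \<in> h")
      case True
      then have "a \<in> ?P" "b \<in> ?P" using mem_players1[of a b h] mem_players2[of a b h] ab by auto
      then have "{i \<in> ?P. i \<in> l} = {a, b}" using ab by auto
      then show ?thesis using True ab by simp
    next
      case False
      have "a \<notin> ?P" using max False ab l g by auto
      moreover have "b \<notin> ?P"
      proof
        assume "b \<in> ?P"
        moreover have "{b, a} \<in> E" using ab l g by (auto simp: insert_commute)
        ultimately have "{b, a} \<in> h" using max by blast
        then show False using False ab by (simp add: insert_commute)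
      qed
      ultimately have "{i \<in> ?P. i \<in> l} = {}" using ab by auto
      then show ?thesis using False by simp
    qed
  qed
  have "(\<Sum>i\<in>?P. position_value v g i) = 1/2 * (\<Sum>i\<in>?P. \<Sum>l\<in>{l. l \<in> g \<and> i \<in> l}. sh v g l)"
    unfolding pv_sh links_of_def by (simp add: sum_distrib_left)
  also have "(\<Sum>i\<in>?P. \<Sum>l\<in>{l. l \<in> g \<and> i \<in> l}. sh v g l) = (\<Sum>l\<in>g. \<Sum>i\<in>{i. i \<in> ?P \<and> i \<in> l}. sh v g l)"
    by (rule sum.swap_restrict) auto
  also have "\<dots> = (\<Sum>l\<in>g. (if l \<in> h then 2 else 0) * sh v g l)"
    by (rule sum.cong[OF refl]) (simp add: cnt)
  also have "\<dots> = 2 * (\<Sum>l\<in>g. if l \<in> h then sh v g l else 0)"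
    by (simp add: sum_distrib_left) (rule sum.cong, auto)
  also have "(\<Sum>l\<in>g. if l \<in> h then sh v g l else 0) = (\<Sum>l\<in>g \<inter> h. sh v g l)"
    by (simp add: sum.inter_restrict)
  finally have A: "(\<Sum>i\<in>?P. position_value v g i) = (\<Sum>l\<in>g \<inter> h. sh v g l)" by simp
  define v1 where "v1 S = v (S \<inter> h)" for S
  define v2 where "v2 S = v (S - h)" for S
  have spl: "v S = v1 S + v2 S" if "S \<subseteq> g" for S
    unfolding v1_def v2_def using v_split[OF v(1) h _ E] that g by auto
  have shs: "sh v g l = sh v1 g l + sh v2 g l" if "l \<in> g" for l
    unfolding sh_def sum.distrib[symmetric]
  proof (rule sum.cong[OF refl])
    fix S assume "S \<in> Pow (g - {l})"
    then have "S \<subseteq> g" "insert l S \<subseteq> g" using that by auto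
    then have "v S = v1 S + v2 S" "v (insert l S) = v1 (insert l S) + v2 (insert l S)" using spl by blast+
    then show "cf (card g) (card S) * (v (insert l S) - v S) =
      cf (card g) (card S) * (v1 (insert l S) - v1 S) + cf (card g) (card S) * (v2 (insert l S) - v2 S)"
      by (simp add: algebra_simps)
  qed
  have sh2: "sh v2 g l = 0" if "l \<in> h" for l
    unfolding sh_def v2_def using that by (intro sum.neutral) auto
  have sh1: "sh v1 g l = 0" if "l \<notin> h" for l
    unfolding sh_def v1_def using that by (intro sum.neutral) auto
  have "(\<Sum>l\<in>g \<inter> h. sh v g l) = (\<Sum>l\<in>g \<inter> h. sh v1 g l)"
    using shs sh2 by (intro sum.cong) auto
  also have "\<dots> = (\<Sum>l\<in>g. sh v1 g l)"
    by (rule sum.mono_neutral_left) (use sh1 in auto)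
  also have "\<dots> = v1 g - v1 {}" by (rule sh_efficient) simp
  also have "\<dots> = v (g \<inter> h)" unfolding v1_def using v(2) by simp
  finally show ?thesis using A by simp
qed

lemma epv_cb:
  fixes v :: "'a::finite game"
  assumes v: "comp_additive v" "v \<in> games" and r: "\<rho> \<in> pdists"
  shows "component_balanced expected_position_value v \<rho>"
  unfolding component_balanced_def
proof
  fix h assume h: "h \<in> components (extent \<rho>)"
  have v0: "v {} = 0" using v unfolding games_def by auto
  have "(\<Sum>i\<in>players h. expected_position_value v \<rho> i) = (\<Sum>g\<in>networks. \<rho> g * (\<Sum>i\<in>players h. position_value v g i))"
    unfolding expected_position_value_def by (subst sum.swap) (simp add: sum_distrib_left)
  also have "\<dots> = (\<Sum>g\<in>support \<rho>. \<rho> g * v (g \<inter> h))"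
  proof (rule sum.mono_neutral_cong_right)
    show "support \<rho> \<subseteq> networks" unfolding support_def by auto
    show "\<forall>g\<in>networks - support \<rho>. \<rho> g * (\<Sum>i\<in>players h. position_value v g i) = 0"
      using pd_zero[OF r] by auto
    fix g assume g: "g \<in> support \<rho>"
    then have "g \<subseteq> extent \<rho>" unfolding extent_def by auto
    then show "\<rho> g * (\<Sum>i\<in>players h. position_value v g i) = \<rho> g * v (g \<inter> h)"
      using cb_g[OF v(1) v0 h extent_net] by simp
  qed simp
  finally show "(\<Sum>i\<in>players h. expected_position_value v \<rho> i) = (\<Sum>g\<in>support \<rho>. \<rho> g * v (g \<inter> h))" .
qed

lemma blc_aux:
  fixes \<rho> :: "'a::finite pdist"
  assumes r: "\<rho> \<in> pdists"
  shows "(\<Sum>l\<in>links_of (extent \<rho>) j. expected_position_value v \<rho> i - expected_position_value v (remove_link \<rho> l) i)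
     = (\<Sum>g\<in>networks. \<rho> g * (\<Sum>l\<in>links_of g j. position_value v g i - position_value v (g - {l}) i))"
proof -
  have LE: "l \<in> complete_net" if "l \<in> links_of (extent \<rho>) j" for l
    using that extent_net unfolding links_of_def by auto
  have "(\<Sum>l\<in>links_of (extent \<rho>) j. expected_position_value v \<rho> i - expected_position_value v (remove_link \<rho> l) i)
     = (\<Sum>l\<in>links_of (extent \<rho>) j. \<Sum>g\<in>networks. \<rho> g * (position_value v g i - position_value v (g - {l}) i))"
  proof (rule sum.cong[OF refl])
    fix l assume "l \<in> links_of (extent \<rho>) j"
    note e = epv_rl[OF LE[OF this], of v \<rho> i]
    show "expected_position_value v \<rho> i - expected_position_value v (remove_link \<rho> l) i =
         (\<Sum>g\<in>(networks :: 'a network set). \<rho> g * (position_value v g i - position_value v (g - {l}) i))"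
      unfolding e by (simp add: expected_position_value_def sum_subtractf right_diff_distrib)
  qed
  also have "\<dots> = (\<Sum>g\<in>networks. \<rho> g * (\<Sum>l\<in>links_of (extent \<rho>) j. position_value v g i - position_value v (g - {l}) i))"
    by (subst sum.swap) (simp add: sum_distrib_left)
  also have "\<dots> = (\<Sum>g\<in>networks. \<rho> g * (\<Sum>l\<in>links_of g j. position_value v g i - position_value v (g - {l}) i))"
  proof (rule sum.cong[OF refl])
    fix g :: "'a network" assume g: "g \<in> networks"
    show "\<rho> g * (\<Sum>l\<in>links_of (extent \<rho>) j. position_value v g i - position_value v (g - {l}) i)
        = \<rho> g * (\<Sum>l\<in>links_of g j. position_value v g i - position_value v (g - {l}) i)"
    proof (cases "\<rho> g = 0")
      case False
      then have sub: "g \<subseteq> extent \<rho>" using pd_sub[OF r] by blast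
      have "(\<Sum>l\<in>links_of (extent \<rho>) j. position_value v g i - position_value v (g - {l}) i)
          = (\<Sum>l\<in>links_of g j. position_value v g i - position_value v (g - {l}) i)"
        by (rule sum.mono_neutral_right) (use sub in \<open>auto simp: links_of_def\<close>, metis Diff_empty Diff_insert0)
      then show ?thesis by simp
    qed simp
  qed
  finally show ?thesis .
qed

lemma epv_blc:
  fixes \<rho> :: "'a::finite pdist"
  assumes r: "\<rho> \<in> pdists"
  shows "balanced_link_contributions expected_position_value v \<rho>"
  unfolding balanced_link_contributions_def
  by (intro allI impI, unfold blc_aux[OF r], rule sum.cong[OF refl], subst pv_blc) auto



lemma links_pos:
  fixes E :: "'a::finite network"
  assumes "i \<notin> isolated E"
  shows "card (links_of E i) > 0"
proof -
  have "i \<in> players E" using assms unfolding isolated_def by auto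
  then obtain y where "y \<noteq> i" "{i, y} \<in> E" unfolding players_iff by blast
  then have "{i, y} \<in> links_of E i" unfolding links_of_def by auto
  then show ?thesis by (simp add: card_gt_0_iff) blast
qed

lemma uniq:
  fixes \<Psi> :: "'a::finite rule"
  assumes A: "allocation_rule \<Psi>"
    and P: "\<forall>(v, \<rho>)\<in>D_class. component_balanced \<Psi> v \<rho> \<and> balanced_link_contributions \<Psi> v \<rho>"
    and v: "v \<in> games" "comp_additive v"
  shows "\<rho> \<in> pdists \<Longrightarrow> \<Psi> v \<rho> = expected_position_value v \<rho>"
proof (induction "card (extent \<rho>)" arbitrary: \<rho> rule: less_induct)
  case less
  note r = less.prems
  define E where "E = extent \<rho>"
  have D: "(v, \<rho>) \<in> D_class" using v r by (simp add: D_class_def)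
  then have CB: "component_balanced \<Psi> v \<rho>" and BL: "balanced_link_contributions \<Psi> v \<rho>"
    using P by auto
  have IH: "\<Psi> v (remove_link \<rho> l) = expected_position_value v (remove_link \<rho> l)" if l: "l \<in> E" for l
  proof -
    have lc: "l \<in> complete_net" using l extent_net unfolding E_def by auto
    have "extent (remove_link \<rho> l) \<subset> E" using rl_extent[OF r lc] l unfolding E_def by auto
    then have "card (extent (remove_link \<rho> l)) < card (extent \<rho>)" unfolding E_def
      by (simp add: psubset_card_mono)
    then show ?thesis using less.hyps rl_pdist[OF r lc] by blast
  qed
  define d where "d i = \<Psi> v \<rho> i - expected_position_value v \<rho> i" for i
  have key: "(\<Sum>l\<in>links_of E j. \<Psi> v \<rho> i - \<Psi> v (remove_link \<rho> l) i)
      - (\<Sum>l\<in>links_of E j. expected_position_value v \<rho> i - expected_position_value v (remove_link \<rho> l) i)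
      = real (card (links_of E j)) * d i" for i j
  proof -
    have "(\<Sum>l\<in>links_of E j. \<Psi> v \<rho> i - \<Psi> v (remove_link \<rho> l) i)
      - (\<Sum>l\<in>links_of E j. expected_position_value v \<rho> i - expected_position_value v (remove_link \<rho> l) i)
      = (\<Sum>l\<in>links_of E j. d i)"
      unfolding sum_subtractf[symmetric] d_def
      by (rule sum.cong[OF refl]) (simp add: IH links_of_def)
    then show ?thesis by simp
  qed
  have eq: "real (card (links_of E j)) * d i = real (card (links_of E i)) * d j" for i j
  proof (cases "i = j")
    case False
    have b1: "(\<Sum>l\<in>links_of E j. \<Psi> v \<rho> i - \<Psi> v (remove_link \<rho> l) i) = (\<Sum>l\<in>links_of E i. \<Psi> v \<rho> j - \<Psi> v (remove_link \<rho> l) j)"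
      using BL False unfolding balanced_link_contributions_def E_def by blast
    have b2: "(\<Sum>l\<in>links_of E j. expected_position_value v \<rho> i - expected_position_value v (remove_link \<rho> l) i)
       = (\<Sum>l\<in>links_of E i. expected_position_value v \<rho> j - expected_position_value v (remove_link \<rho> l) j)"
      using epv_blc[OF r, of v] False unfolding balanced_link_contributions_def E_def by blast
    show ?thesis using key[of j i] key[of i j] b1 b2 by simp
  qed simp
  have isol: "d i = 0" if "i \<in> isolated E" for i
    using A epv_alloc r v that unfolding allocation_rule_def d_def E_def by auto
  have all0: "d i = 0" for i
  proof (cases "E = {}")
    case True
    then have "i \<in> isolated E" unfolding isolated_def players_def nbrs_def by auto
    then show ?thesis by (rule isol)
  next
    case False
    have En: "E \<subseteq> complete_net" unfolding E_def by (rule extent_net)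
    obtain h where h: "h \<in> components E" using comp_exists[OF En False] by blast
    then have hE: "h \<subseteq> E" "h \<noteq> {}" unfolding components_def by auto
    then obtain l where l: "l \<in> h" by auto
    have hc: "h \<subseteq> complete_net" using hE En by auto
    obtain a b where ab: "a \<noteq> b" "l = {a, b}" by (rule link_cases[OF l hc])
    have aP: "a \<in> players h" using mem_players1[of a b h] l ab by auto
    then have aE: "a \<notin> isolated E" using players_mono[OF hE(1)] unfolding isolated_def by auto
    have pos: "\<And>k. k \<in> players h \<Longrightarrow> k \<notin> isolated E"
      using players_mono[OF hE(1)] unfolding isolated_def by auto
    have "(\<Sum>k\<in>players h. \<Psi> v \<rho> k) = (\<Sum>k\<in>players h. expected_position_value v \<rho> k)"
      using CB epv_cb[OF v(2) v(1) r] h unfolding component_balanced_def E_def by auto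
    then have s0: "(\<Sum>k\<in>players h. d k) = 0" unfolding d_def by (simp add: sum_subtractf)
    have "0 = real (card (links_of E a)) * (\<Sum>k\<in>players h. d k)" using s0 by simp
    also have "\<dots> = (\<Sum>k\<in>players h. real (card (links_of E k)) * d a)"
      by (simp add: sum_distrib_left eq)
    also have "\<dots> = d a * (\<Sum>k\<in>players h. real (card (links_of E k)))"
      by (simp add: sum_distrib_left mult.commute)
    finally have z: "d a * (\<Sum>k\<in>players h. real (card (links_of E k))) = 0" by simp
    have "(\<Sum>k\<in>players h. real (card (links_of E k))) > 0"
      by (rule sum_pos2[OF _ aP]) (use links_pos[OF aE] in auto)
    then have da: "d a = 0" using z by simp
    show ?thesis
    proof (cases "i \<in> isolated E")
      case True then show ?thesis by (rule isol)
    next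
      case False
      have "real (card (links_of E a)) * d i = 0" using eq[of a i] da by simp
      then show ?thesis using links_pos[OF aE] by (metis mult_eq_0_iff of_nat_0_eq_iff less_irrefl)
    qed
  qed
  show ?case using all0 unfolding d_def by auto
qed

theorem mainTheorem3:
  fixes dummy :: "'a::finite itself"
  shows "(allocation_rule (expected_position_value :: 'a rule) \<and>
          (\<forall>(v, \<rho>)\<in>(D_class :: ('a game \<times> 'a pdist) set).
             component_balanced expected_position_value v \<rho> \<and>
             balanced_link_contributions expected_position_value v \<rho>)) \<and>
         (\<forall>\<Psi> :: 'a rule. allocation_rule \<Psi> \<and>
             (\<forall>(v, \<rho>)\<in>D_class. component_balanced \<Psi> v \<rho> \<and> balanced_link_contributions \<Psi> v \<rho>)
           \<longrightarrow> (\<forall>(v, \<rho>)\<in>D_class. \<Psi> v \<rho> = expected_position_value v \<rho>))"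
proof (intro conjI)
  show "allocation_rule (expected_position_value :: 'a rule)" by (rule epv_alloc)
  show "\<forall>(v, \<rho>)\<in>(D_class :: ('a game \<times> 'a pdist) set).
             component_balanced expected_position_value v \<rho> \<and>
             balanced_link_contributions expected_position_value v \<rho>"
    using epv_cb epv_blc unfolding D_class_def by auto
  show "\<forall>\<Psi> :: 'a rule. allocation_rule \<Psi> \<and>
             (\<forall>(v, \<rho>)\<in>D_class. component_balanced \<Psi> v \<rho> \<and> balanced_link_contributions \<Psi> v \<rho>)
           \<longrightarrow> (\<forall>(v, \<rho>)\<in>D_class. \<Psi> v \<rho> = expected_position_value v \<rho>)"
  proof (intro allI impI)
    fix \<Psi> :: "'a rule"
    assume H: "allocation_rule \<Psi> \<and>
             (\<forall>(v, \<rho>)\<in>D_class. component_balanced \<Psi> v \<rho> \<and> balanced_link_contributions \<Psi> v \<rho>)"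
    show "\<forall>(v, \<rho>)\<in>D_class. \<Psi> v \<rho> = expected_position_value v \<rho>"
    proof (clarify)
      fix v \<rho> assume "(v, \<rho>) \<in> (D_class :: ('a game \<times> 'a pdist) set)"
      then have "v \<in> games" "comp_additive v" "\<rho> \<in> pdists" unfolding D_class_def by auto
      then show "\<Psi> v \<rho> = expected_position_value v \<rho>"
        using uniq[of \<Psi> v \<rho>] H by blast
    qed
  qed
qed

end
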